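(* Let $s$ and $d$ be positive integers with $s\leqslant d/2$ and $d$ even. Then $$ n(d-s,d)\geqslant \sum_{i=0}^{\frac d2 -s}\binom{d-s}{i}+\sum_{k=1}^{s-1}2^k\binom{d-s}{\frac d2-s+k}+2^s\sum_{i=\frac d2}^{d-s}\binom{d-s}{i}. $$
   Context: A box in $\mathbb{R}^d$ is an axis-parallel $d$-dimensional cuboid. For a positive integer $k\leqslant d$, two boxes in $\mathbb{R}^d$ are called $k$-neighborly if their intersection is a box of dimension at least $d-k$ and at most $d-1$. $n(k,d)$ denotes the maximum size of a family of pairwise $k$-neighborly boxes in $\mathbb{R}^d$. Equivalently, $n(k,d)$ is the maximum number of strings in $\{0,1,*\}^d$ such that any two distinct ones $u,v$ satisfy $1\leqslant \mathrm{dist}(u,v)\leqslant k$, where $\mathrm{dist}(u,v)$ is the number of positions $i$ with $u_i\neq v_i$ and $u_i,v_i\in\{0,1\}$. *)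

theory Defs
  imports Main
begin

datatype letter = Zero | One | Star

definition sdist :: "letter list \<Rightarrow> letter list \<Rightarrow> nat" where
  "sdist u v = card {i. i < length u \<and> i < length v \<and> u ! i \<noteq> v ! i
                        \<and> u ! i \<noteq> Star \<and> v ! i \<noteq> Star}"

definition neighborly_family :: "nat \<Rightarrow> nat \<Rightarrow> letter list set \<Rightarrow> bool" where
  "neighborly_family k d F \<longleftrightarrow>
     (\<forall>u\<in>F. length u = d) \<and>
     (\<forall>u\<in>F. \<forall>v\<in>F. u \<noteq> v \<longrightarrow> 1 \<le> sdist u v \<and> sdist u v \<le> k)"

text \<open>n(k,d): maximum size of such a family (a finite maximum, as all strings
  of length d over a 3-letter alphabet form a finite set).\<close>
definition nkd :: "nat \<Rightarrow> nat \<Rightarrow> nat" where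
  "nkd k d = Max {card F | F. neighborly_family k d F}"

end

theory Submission imports Defs begin

fun g :: "int \<Rightarrow> bool list \<Rightarrow> bool list" where
  "g e [] = []"
| "g e (x # a) = (if x then (if e < 0 then False # g (e+1) a else True # g e a)
                  else (if e > 0 then True # g (e-1) a else False # g e a))"

fun ones :: "bool list \<Rightarrow> nat" where
  "ones [] = 0"
| "ones (x # xs) = (if x then 1 else 0) + ones xs"

fun cones :: "bool list \<Rightarrow> bool list \<Rightarrow> nat" where
  "cones (x # xs) (y # ys) = (if x \<and> y then 1 else 0) + cones xs ys"
| "cones _ _ = 0"

fun ham :: "bool list \<Rightarrow> bool list \<Rightarrow> nat" where
  "ham (x # xs) (y # ys) = (if x \<noteq> y then 1 else 0) + ham xs ys"
| "ham _ _ = 0"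

fun agr :: "bool list \<Rightarrow> bool list \<Rightarrow> nat" where
  "agr (x # xs) (y # ys) = (if x = y then 1 else 0) + agr xs ys"
| "agr _ _ = 0"

lemma key:
  "length a = length a' \<Longrightarrow> int (cones (g e a) (g e' a')) \<le> int (agr a a') + \<bar>e + e'\<bar>"
proof (induction a a' arbitrary: e e' rule: list_induct2)
  case Nil
  then show ?case by simp
next
  case (Cons x xs y ys)
  have IH: "\<And>e e'. int (cones (g e xs) (g e' ys)) \<le> int (agr xs ys) + \<bar>e + e'\<bar>" by (rule Cons.IH)
  show ?case
    apply (cases x; cases y; simp)
    apply (smt (verit) IH)+
    done
qed

lemma length_g[simp]: "length (g e a) = length a"
  by (induction a arbitrary: e) auto

lemma ones_le: "ones a \<le> length a"
  by (induction a) auto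

lemma ones_g: "int (ones (g e a)) = max 0 (min (int (length a)) (int (ones a) + e))"
proof (induction a arbitrary: e)
  case Nil
  then show ?case by simp
next
  case (Cons x a)
  have "int (ones a) \<le> int (length a)" using ones_le by simp
  then show ?case using Cons.IH by (cases x) (auto simp: Cons.IH)
qed

fun T :: "bool list \<Rightarrow> letter list set" where
  "T [] = {[]}"
| "T (b # mk) = (if b then Cons Zero ` T mk \<union> Cons One ` T mk else Cons Star ` T mk)"

fun sd :: "letter list \<Rightarrow> letter list \<Rightarrow> nat" where
  "sd (x # u) (y # v) = (if x \<noteq> y \<and> x \<noteq> Star \<and> y \<noteq> Star then 1 else 0) + sd u v"
| "sd _ _ = 0"

lemma T_len: "t \<in> T mk \<Longrightarrow> length t = length mk"
  by (induction mk arbitrary: t) (auto split: if_splits)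

lemma T_fin: "finite (T mk)"
  by (induction mk) auto

lemma T_card: "card (T mk) = 2 ^ ones mk"
proof (induction mk)
  case Nil
  then show ?case by simp
next
  case (Cons b mk)
  show ?case
  proof (cases b)
    case True
    have d: "Cons Zero ` T mk \<inter> Cons One ` T mk = {}" by auto
    have "card (Cons Zero ` T mk \<union> Cons One ` T mk) = card (Cons Zero ` T mk) + card (Cons One ` T mk)"
      by (rule card_Un_disjoint) (auto simp: T_fin)
    also have "\<dots> = 2 * card (T mk)" by (simp add: card_image)
    finally show ?thesis using True Cons.IH by simp
  next
    case False
    then show ?thesis using Cons.IH by (simp add: card_image)
  qed
qed

lemma sd_T: "t \<in> T mk \<Longrightarrow> t' \<in> T mk' \<Longrightarrow> length mk = length mk' \<Longrightarrow> sd t t' \<le> cones mk mk'"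
proof (induction mk arbitrary: mk' t t')
  case Nil
  then show ?case by simp
next
  case (Cons b mk)
  then obtain b' mk2 where mk': "mk' = b' # mk2" by (cases mk') auto
  from Cons.prems mk' show ?case
    by (cases b; cases b') (auto split: if_splits dest!: Cons.IH)
qed

lemma sd_T_pos: "t \<in> T mk \<Longrightarrow> t' \<in> T mk \<Longrightarrow> t \<noteq> t' \<Longrightarrow> 1 \<le> sd t t'"
proof (induction mk arbitrary: t t')
  case Nil
  then show ?case by simp
next
  case (Cons b mk)
  from Cons.prems show ?case
    by (cases b) (auto split: if_splits dest: Cons.IH)
qed

lemma sd_append: "length u1 = length v1 \<Longrightarrow> sd (u1 @ u2) (v1 @ v2) = sd u1 v1 + sd u2 v2"
  by (induction u1 v1 rule: list_induct2) auto

definition enc :: "bool list \<Rightarrow> letter list" where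
  "enc w = map (\<lambda>b. if b then One else Zero) w"

lemma sd_enc: "length w = length w' \<Longrightarrow> sd (enc w) (enc w') = ham w w'"
  by (induction w w' rule: list_induct2) (auto simp: enc_def)

lemma enc_inj: "enc w = enc w' \<Longrightarrow> w = w'"
proof -
  have "inj (\<lambda>b. if b then One else Zero)" by (auto simp: inj_def split: if_splits)
  then show "enc w = enc w' \<Longrightarrow> w = w'" unfolding enc_def by (simp add: inj_map_eq_map)
qed

lemma len_enc[simp]: "length (enc w) = length w" by (simp add: enc_def)

lemma ham_agr: "length a = length a' \<Longrightarrow> ham a a' + agr a a' = length a"
  by (induction a a' rule: list_induct2) auto

lemma ham_le1: "length a = length a' \<Longrightarrow> ham a a' \<le> ones a + ones a'"
  by (induction a a' rule: list_induct2) auto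

lemma ham_le2: "length a = length a' \<Longrightarrow> ham a a' + ones a + ones a' \<le> 2 * length a"
  by (induction a a' rule: list_induct2) auto

lemma ham_pos: "length a = length a' \<Longrightarrow> a \<noteq> a' \<Longrightarrow> 1 \<le> ham a a'"
  by (induction a a' rule: list_induct2) auto

lemma ham_append: "length a = length a' \<Longrightarrow> ham (a @ b) (a' @ b') = ham a a' + ham b b'"
  by (induction a a' rule: list_induct2) auto

lemma ones_append: "ones (a @ b) = ones a + ones b"
  by (induction a) auto

lemma card_Suc_split: "card {i. i < Suc n \<and> Q i} = (if Q 0 then 1 else 0) + card {i. i < n \<and> Q (Suc i)}"
proof -
  have e: "{i. i < Suc n \<and> Q i} = (if Q 0 then {0} else {}) \<union> Suc ` {i. i < n \<and> Q (Suc i)}"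
    by (auto simp: less_Suc_eq_0_disj)
  show ?thesis unfolding e
    by (subst card_Un_disjoint) (auto simp: card_image)
qed

lemma sdist_sd: "length u = length v \<Longrightarrow> sdist u v = sd u v"
proof (induction u v rule: list_induct2)
  case Nil
  then show ?case by (simp add: sdist_def)
next
  case (Cons x xs y ys)
  then show ?case unfolding sdist_def by (simp add: card_Suc_split)
qed


lemma letter_UNIV: "(UNIV :: letter set) = {Zero, One, Star}"
  using letter.exhaust by auto

lemma finite_letter_lists: "finite {xs :: letter list. length xs = n}"
proof -
  have "finite {xs :: letter list. set xs \<subseteq> UNIV \<and> length xs = n}"
    by (rule finite_lists_length_eq) (simp add: letter_UNIV)
  then show ?thesis by simp
qed

lemma nkd_ge: assumes "neighborly_family k d F" shows "card F \<le> nkd k d"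
proof -
  let ?U = "{xs :: letter list. length xs = d}"
  have sub: "\<And>G. neighborly_family k d G \<Longrightarrow> G \<subseteq> ?U" unfolding neighborly_family_def by auto
  have "{card G | G. neighborly_family k d G} \<subseteq> {..card ?U}"
    using sub card_mono[OF finite_letter_lists] by fastforce
  then have fin: "finite {card G | G. neighborly_family k d G}" using finite_subset by blast
  show ?thesis unfolding nkd_def by (rule Max_ge[OF fin]) (use assms in blast)
qed

lemma card_ones: "card {w. length w = n \<and> ones w = k} = n choose k"
proof (induction n arbitrary: k)
  case 0
  have "{w. length w = 0 \<and> ones w = k} = (if k = 0 then {[]} else {})" by auto
  then show ?case by simp
next
  case (Suc n)
  show ?case
  proof (cases k)
    case 0
    have "{w. length w = Suc n \<and> ones w = k} = Cons False ` {w. length w = n \<and> ones w = 0}"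
      using 0 by (auto simp: length_Suc_conv split: if_splits)
    then show ?thesis using Suc.IH 0 by (simp add: card_image)
  next
    case (Suc j)
    have eq: "{w. length w = Suc n \<and> ones w = k} = Cons True ` {w. length w = n \<and> ones w = j}
          \<union> Cons False ` {w. length w = n \<and> ones w = k}"
      using Suc by (auto simp: length_Suc_conv split: if_splits)
    have fin: "finite {w :: bool list. length w = n \<and> P w}" for n P
    proof -
      have "finite {w :: bool list. set w \<subseteq> UNIV \<and> length w = n}" by (rule finite_lists_length_eq) simp
      then show ?thesis by (rule finite_subset[rotated]) auto
    qed
    have "card {w. length w = Suc n \<and> ones w = k} = card {w. length w = n \<and> ones w = j} + card {w. length w = n \<and> ones w = k}"
      unfolding eq by (subst card_Un_disjoint) (auto intro: fin simp: card_image)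
    then show ?thesis using Suc.IH Suc by simp
  qed
qed


definition mask :: "nat \<Rightarrow> nat \<Rightarrow> bool list \<Rightarrow> bool list" where
  "mask s H w = g (int (ones (drop s w)) - int H) (take s w)"

definition Fam :: "nat \<Rightarrow> nat \<Rightarrow> letter list set" where
  "Fam s H = (\<Union>w\<in>{w. length w = s + 2 * H}. (\<lambda>t. enc w @ t) ` T (mask s H w))"

lemma fam_ok: "neighborly_family (s + 2 * H) (2 * s + 2 * H) (Fam s H)"
proof -
  have len: "length x = 2 * s + 2 * H" if "x \<in> Fam s H" for x
    using that by (auto simp: Fam_def mask_def dest!: T_len)
  have pair: "1 \<le> sdist x x' \<and> sdist x x' \<le> s + 2 * H"
    if x: "x \<in> Fam s H" and x': "x' \<in> Fam s H" and ne: "x \<noteq> x'" for x x'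
  proof -
    obtain w t where w: "length w = s + 2 * H" and t: "t \<in> T (mask s H w)" and xe: "x = enc w @ t"
      using x by (auto simp: Fam_def)
    obtain w' t' where w': "length w' = s + 2 * H" and t': "t' \<in> T (mask s H w')" and xe': "x' = enc w' @ t'"
      using x' by (auto simp: Fam_def)
    have lt: "length t = s" "length t' = s" using T_len[OF t] T_len[OF t'] w w' by (auto simp: mask_def)
    have sdx: "sdist x x' = ham w w' + sd t t'"
      using w w' lt xe xe' by (simp add: sdist_sd sd_append sd_enc)
    define a where "a = take s w"
    define b where "b = drop s w"
    define a' where "a' = take s w'"
    define b' where "b' = drop s w'"
    have la: "length a = s" "length a' = s" "length b = 2 * H" "length b' = 2 * H"
      using w w' by (auto simp: a_def a'_def b_def b'_def)
    have hw: "ham w w' = ham a a' + ham b b'"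
      using ham_append[of a a' b b'] la by (simp add: a_def b_def a'_def b'_def)
    have lo: "1 \<le> ham w w' + sd t t'"
    proof (cases "w = w'")
      case True
      then have "t \<noteq> t'" using ne xe xe' by simp
      then have "1 \<le> sd t t'" using sd_T_pos[OF t] t' True by simp
      then show ?thesis by simp
    next
      case False
      then show ?thesis using ham_pos[of w w'] w w' by simp
    qed
    have s1: "sd t t' \<le> cones (mask s H w) (mask s H w')"
      by (rule sd_T[OF t t']) (use w w' in \<open>simp add: mask_def\<close>)
    have s2: "int (cones (mask s H w) (mask s H w')) \<le> int (agr a a') + \<bar>(int (ones b) - int H) + (int (ones b') - int H)\<bar>"
      unfolding mask_def a_def a'_def b_def b'_def by (rule key) (use w w' in simp)
    have s3: "ham a a' + agr a a' = s" using ham_agr[of a a'] la by simp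
    have s4: "ham b b' \<le> ones b + ones b'" using ham_le1[of b b'] la by simp
    have s5: "ham b b' + ones b + ones b' \<le> 2 * (2 * H)" using ham_le2[of b b'] la by simp
    have "int (ham w w' + sd t t') \<le> int s + 2 * int H"
      using hw s1 s2 s3 s4 s5 by linarith
    then show ?thesis using sdx lo by simp
  qed
  show ?thesis unfolding neighborly_family_def using len pair by blast
qed

lemma card_Fam: "card (Fam s H) = (\<Sum>w\<in>{w. length w = s + 2 * H}. 2 ^ ones (mask s H w))"
proof -
  have finW: "finite {w :: bool list. length w = n}" for n
  proof -
    have "finite {w :: bool list. set w \<subseteq> UNIV \<and> length w = n}" by (rule finite_lists_length_eq) simp
    then show ?thesis by simp
  qed
  have "card (Fam s H) = (\<Sum>w\<in>{w. length w = s + 2 * H}. card ((\<lambda>t. enc w @ t) ` T (mask s H w)))"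
    unfolding Fam_def
  proof (rule card_UN_disjoint)
    show "finite {w :: bool list. length w = s + 2 * H}" by (rule finW)
    show "\<forall>i\<in>{w. length w = s + 2 * H}. finite ((\<lambda>t. enc i @ t) ` T (mask s H i))" by (simp add: T_fin)
    show "\<forall>i\<in>{w. length w = s + 2 * H}. \<forall>j\<in>{w. length w = s + 2 * H}. i \<noteq> j \<longrightarrow>
      (\<lambda>t. enc i @ t) ` T (mask s H i) \<inter> (\<lambda>t. enc j @ t) ` T (mask s H j) = {}"
      using enc_inj by auto
  qed
  also have "\<dots> = (\<Sum>w\<in>{w. length w = s + 2 * H}. 2 ^ ones (mask s H w))"
    by (rule sum.cong) (auto simp: card_image inj_on_def T_card)
  finally show ?thesis .
qed


definition cl :: "nat \<Rightarrow> nat \<Rightarrow> nat \<Rightarrow> nat" where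
  "cl s H i = nat (max 0 (min (int s) (int i - int H)))"

lemma ones_mask: "length w = s + 2 * H \<Longrightarrow> ones (mask s H w) = cl s H (ones w)"
proof -
  assume w: "length w = s + 2 * H"
  have "ones w = ones (take s w) + ones (drop s w)"
    using ones_append[of "take s w" "drop s w"] by simp
  moreover have "int (ones (mask s H w)) = max 0 (min (int s) (int (ones (take s w)) + (int (ones (drop s w)) - int H)))"
    unfolding mask_def ones_g using w by simp
  ultimately show ?thesis unfolding cl_def by simp
qed

lemma sum_W: "(\<Sum>w\<in>{w. length w = s + 2 * H}. 2 ^ ones (mask s H w)) =
   (\<Sum>i=0..s + 2 * H. ((s + 2 * H) choose i) * 2 ^ cl s H i)"
proof -
  let ?W = "{w :: bool list. length w = s + 2 * H}"
  have finW: "finite ?W"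
  proof -
    have "finite {w :: bool list. set w \<subseteq> UNIV \<and> length w = s + 2 * H}" by (rule finite_lists_length_eq) simp
    then show ?thesis by simp
  qed
  have "(\<Sum>w\<in>?W. 2 ^ ones (mask s H w)) = (\<Sum>w\<in>?W. (2::nat) ^ cl s H (ones w))"
    by (rule sum.cong) (auto simp: ones_mask)
  also have "\<dots> = (\<Sum>i\<in>{0..s + 2 * H}. \<Sum>w\<in>{w \<in> ?W. ones w = i}. (2::nat) ^ cl s H (ones w))"
    by (rule sum.group[symmetric]) (use finW ones_le in \<open>auto simp: image_subset_iff\<close>, metis ones_le)
  also have "\<dots> = (\<Sum>i=0..s + 2 * H. ((s + 2 * H) choose i) * 2 ^ cl s H i)"
  proof (rule sum.cong)
    fix i
    have "(\<Sum>w\<in>{w \<in> ?W. ones w = i}. (2::nat) ^ cl s H (ones w)) = (\<Sum>w\<in>{w \<in> ?W. ones w = i}. (2::nat) ^ cl s H i)"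
      by (rule sum.cong) auto
    also have "\<dots> = card {w \<in> ?W. ones w = i} * 2 ^ cl s H i" by simp
    also have "card {w \<in> ?W. ones w = i} = (s + 2 * H) choose i"
      using card_ones[of "s + 2 * H" i] by simp
    finally show "(\<Sum>w\<in>{w \<in> ?W. ones w = i}. (2::nat) ^ cl s H (ones w)) = ((s + 2 * H) choose i) * 2 ^ cl s H i" .
  qed simp
  finally show ?thesis .
qed

lemma sum_split:
  assumes "0 < s"
  shows "(\<Sum>i=0..s + 2 * H. ((s + 2 * H) choose i) * 2 ^ cl s H i) =
     (\<Sum>i=0..H. (s + 2 * H) choose i)
     + (\<Sum>k=1..s - 1. 2 ^ k * ((s + 2 * H) choose (H + k)))
     + 2 ^ s * (\<Sum>i=s + H..s + 2 * H. (s + 2 * H) choose i)"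
proof -
  let ?f = "\<lambda>i. ((s + 2 * H) choose i) * 2 ^ cl s H i"
  have "(\<Sum>i=0..s + 2 * H. ?f i) = sum ?f {0..<Suc (s + 2 * H)}"
    by (simp add: atLeastLessThanSuc_atLeastAtMost)
  also have "\<dots> = sum ?f {0..<Suc H} + sum ?f {Suc H..<s + H} + sum ?f {s + H..<Suc (s + 2 * H)}"
  proof -
    have c1: "sum ?f {0..<Suc H} + sum ?f {Suc H..<s + H} = sum ?f {0..<s + H}"
      by (rule sum.atLeastLessThan_concat) (use assms in auto)
    have c2: "sum ?f {0..<s + H} + sum ?f {s + H..<Suc (s + 2 * H)} = sum ?f {0..<Suc (s + 2 * H)}"
      by (rule sum.atLeastLessThan_concat) auto
    show ?thesis using c1 c2 by simp
  qed
  also have "sum ?f {0..<Suc H} = (\<Sum>i=0..H. (s + 2 * H) choose i)"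
    by (simp add: atLeastLessThanSuc_atLeastAtMost[symmetric] cl_def)
  also have "sum ?f {Suc H..<s + H} = (\<Sum>k=1..s - 1. 2 ^ k * ((s + 2 * H) choose (H + k)))"
  proof -
    have "sum ?f {Suc H..<s + H} = sum ?f {1 + H..<s + H}" by simp
    also have "\<dots> = (\<Sum>k=1..<s. ?f (k + H))" by (rule sum.shift_bounds_nat_ivl)
    also have "\<dots> = (\<Sum>k=1..<s. 2 ^ k * ((s + 2 * H) choose (H + k)))"
      by (rule sum.cong) (auto simp: cl_def add.commute)
    also have "{1..<s} = {1..s - 1}" using assms by auto
    finally show ?thesis .
  qed
  also have "sum ?f {s + H..<Suc (s + 2 * H)} = 2 ^ s * (\<Sum>i=s + H..s + 2 * H. (s + 2 * H) choose i)"
    by (simp add: atLeastLessThanSuc_atLeastAtMost sum_distrib_left cl_def mult.commute)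
  finally show ?thesis .
qed


theorem theorem1:
  fixes s d :: nat
  assumes "0 < s" and "0 < d" and "even d" and "2 * s \<le> d"
  shows "nkd (d - s) d \<ge>
     (\<Sum>i=0..d div 2 - s. (d - s) choose i)
     + (\<Sum>k=1..s - 1. 2 ^ k * ((d - s) choose (d div 2 - s + k)))
     + 2 ^ s * (\<Sum>i=d div 2..d - s. (d - s) choose i)"
proof -
  define H where "H = d div 2 - s"
  have e1: "d div 2 = s + H" and e2: "d - s = s + 2 * H" and e3: "d = 2 * s + 2 * H"
    using assms unfolding H_def by auto
  have "card (Fam s H) \<le> nkd (s + 2 * H) (2 * s + 2 * H)"
    by (rule nkd_ge[OF fam_ok])
  moreover have "card (Fam s H) =
     (\<Sum>i=0..H. (s + 2 * H) choose i)
     + (\<Sum>k=1..s - 1. 2 ^ k * ((s + 2 * H) choose (H + k)))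
     + 2 ^ s * (\<Sum>i=s + H..s + 2 * H. (s + 2 * H) choose i)"
    unfolding card_Fam sum_W using sum_split[OF assms(1)] by simp
  ultimately show ?thesis unfolding e1 e2 H_def[symmetric] using e3 by simp
qed

end
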